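(* Let $c\ge0$ and $g_0,g_1,\dots,g_K\in\mathbb{R}^m$. Let $d^*$ be the solution of $$\max_{d\in\mathbb{R}^m}\ \min_{i\in[K]} g_i^\top d\quad\text{s.t.}\quad \|g_0-d\|\le c\|g_0\|.$$ Then $$d^*=g_0+\frac{c\|g_0\|}{\|g_{w^*}\|}\,g_{w^*},$$ where $g_{w^*}=\sum_i w^*_i g_i$ and $w^*$ is the solution of $$\min_{w\in\mathcal W}\ g_w^\top g_0+c\|g_0\|\,\|g_w\|.$$ In addition, $$\min_i g_i^\top d^*=g_{w^*}^\top g_0+c\|g_0\|\,\|g_{w^*}\|.$$
   Context: $\mathcal W=\{w\in\mathbb{R}^K: \sum_i w_i=1,\ w_i\ge0\ \forall i\in[K]\}$ is the probability simplex, and for $w\in\mathcal W$, $g_w=\sum_{i=1}^K w_i g_i$. $[K]=\{1,\dots,K\}$. *)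

theory Defs
  imports "HOL-Analysis.Analysis"
begin

definition prob_simplex :: "nat \<Rightarrow> (nat \<Rightarrow> real) set" where
  "prob_simplex K = {w. (\<forall>i\<in>{1..K}. 0 \<le> w i) \<and> (\<Sum>i\<in>{1..K}. w i) = 1}"

definition gw :: "nat \<Rightarrow> (nat \<Rightarrow> 'a::real_vector) \<Rightarrow> (nat \<Rightarrow> real) \<Rightarrow> 'a" where
  "gw K g w = (\<Sum>i\<in>{1..K}. w i *\<^sub>R g i)"

definition primal_obj :: "nat \<Rightarrow> (nat \<Rightarrow> 'a::real_inner) \<Rightarrow> 'a \<Rightarrow> real" where
  "primal_obj K g d = (MIN i\<in>{1..K}. g i \<bullet> d)"

definition dual_obj :: "nat \<Rightarrow> real \<Rightarrow> (nat \<Rightarrow> 'a::real_inner) \<Rightarrow> (nat \<Rightarrow> real) \<Rightarrow> real" where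
  "dual_obj K c g w = gw K g w \<bullet> g 0 + c * norm (g 0) * norm (gw K g w)"

definition is_primal_sol :: "nat \<Rightarrow> real \<Rightarrow> (nat \<Rightarrow> 'a::real_inner) \<Rightarrow> 'a \<Rightarrow> bool" where
  "is_primal_sol K c g d \<longleftrightarrow>
     norm (g 0 - d) \<le> c * norm (g 0) \<and>
     (\<forall>d'. norm (g 0 - d') \<le> c * norm (g 0) \<longrightarrow> primal_obj K g d' \<le> primal_obj K g d)"

definition is_dual_sol :: "nat \<Rightarrow> real \<Rightarrow> (nat \<Rightarrow> 'a::real_inner) \<Rightarrow> (nat \<Rightarrow> real) \<Rightarrow> bool" where
  "is_dual_sol K c g w \<longleftrightarrow>
     w \<in> prob_simplex K \<and> (\<forall>w'\<in>prob_simplex K. dual_obj K c g w \<le> dual_obj K c g w')"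

end

theory Submission
  imports Defs
begin

lemma first_order:
  fixes a b g0 :: "'a::real_inner"
  assumes r: "0 \<le> r" and e: "0 < e"
    and min: "\<And>t. 0 < t \<Longrightarrow> t \<le> 1 \<Longrightarrow>
       a \<bullet> g0 + r * sqrt (norm a ^ 2 + e ^ 2) \<le> (a + t *\<^sub>R b) \<bullet> g0 + r * sqrt (norm (a + t *\<^sub>R b) ^ 2 + e ^ 2)"
  shows "0 \<le> b \<bullet> g0 + r * (a \<bullet> b) / sqrt (norm a ^ 2 + e ^ 2)"
proof -
  define s where "s = sqrt (norm a ^ 2 + e ^ 2)"
  have spos: "s > 0" unfolding s_def using e by (simp add: add_nonneg_pos)
  define G where "G t = b \<bullet> g0 + r * (2 * (a \<bullet> b) + t * norm b ^ 2) / (sqrt (norm (a + t *\<^sub>R b) ^ 2 + e ^ 2) + s)" for t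
  have Gpos: "0 \<le> G t" if t: "0 < t" "t \<le> 1" for t
  proof -
    define Q where "Q = sqrt (norm (a + t *\<^sub>R b) ^ 2 + e ^ 2)"
    have Q0: "Q \<ge> 0" unfolding Q_def by simp
    have nq: "norm (a + t *\<^sub>R b) ^ 2 = norm a ^ 2 + 2 * t * (a \<bullet> b) + t^2 * norm b ^ 2"
      unfolding power2_norm_eq_inner by (simp add: inner_add_left inner_add_right inner_commute power2_eq_square algebra_simps)
    have Q2: "Q^2 = norm a ^ 2 + 2 * t * (a \<bullet> b) + t^2 * norm b ^ 2 + e^2"
    proof -
      have "0 \<le> norm (a + t *\<^sub>R b) ^ 2 + e^2" by simp
      then show ?thesis unfolding Q_def using nq by simp
    qed
    have s2: "s^2 = norm a ^ 2 + e^2" unfolding s_def by simp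
    have "Q - s = (Q^2 - s^2) / (Q + s)" using Q0 spos
      by (simp add: field_simps power2_eq_square)
    also have "\<dots> = t * (2 * (a \<bullet> b) + t * norm b ^ 2) / (Q + s)"
      using Q2 s2 by (simp add: algebra_simps power2_eq_square)
    finally have QS: "Q - s = t * (2 * (a \<bullet> b) + t * norm b ^ 2) / (Q + s)" .
    have "0 \<le> t * (b \<bullet> g0) + r * (Q - s)"
      using min[OF t] unfolding Q_def[symmetric] s_def[symmetric]
      by (simp add: inner_add_left algebra_simps)
    also have "\<dots> = t * G t"
      unfolding G_def Q_def[symmetric] QS by (simp add: algebra_simps)
    finally show ?thesis using t by (simp add: zero_le_mult_iff)
  qed
  have lim: "(G \<longlongrightarrow> G 0) (at_right 0)"
  proof -
    have "((\<lambda>t. b \<bullet> g0 + r * (2 * (a \<bullet> b) + t * norm b ^ 2) / (sqrt (norm (a + t *\<^sub>R b) ^ 2 + e ^ 2) + s))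
        \<longlongrightarrow> b \<bullet> g0 + r * (2 * (a \<bullet> b) + 0 * norm b ^ 2) / (sqrt (norm (a + 0 *\<^sub>R b) ^ 2 + e ^ 2) + s)) (at_right 0)"
      using spos by (intro tendsto_intros) (auto simp: add_nonneg_pos s_def[symmetric])
    then show ?thesis unfolding G_def by simp
  qed
  have "0 \<le> G 0"
    apply (rule tendsto_lowerbound[OF lim])
     apply (simp add: eventually_at_right_field)
     apply (rule exI[of _ 1]) using Gpos apply auto
    done
  moreover have "G 0 = b \<bullet> g0 + r * (a \<bullet> b) / s"
  proof -
    have "G 0 = b \<bullet> g0 + r * (2 * (a \<bullet> b)) / (s + s)"
      unfolding G_def s_def by simp
    then show ?thesis using spos by (simp add: field_simps)
  qed
  ultimately show ?thesis unfolding s_def by simp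
qed

lemma core:
  fixes C :: "'a::euclidean_space set" and g0 :: 'a
  assumes "compact C" "convex C" "C \<noteq> {}" and r: "0 \<le> r" and e: "0 < e"
  shows "\<exists>a\<in>C. \<exists>d. norm (d - g0) \<le> r \<and> (\<forall>x\<in>C. a \<bullet> g0 + r * norm a - r * e \<le> x \<bullet> d)"
proof -
  have "continuous_on C (\<lambda>y. y \<bullet> g0 + r * sqrt (norm y ^ 2 + e ^ 2))"
    by (intro continuous_intros)
  then obtain a where aC: "a \<in> C" and amin: "\<And>y. y \<in> C \<Longrightarrow>
      a \<bullet> g0 + r * sqrt (norm a ^ 2 + e ^ 2) \<le> y \<bullet> g0 + r * sqrt (norm y ^ 2 + e ^ 2)"
    using continuous_attains_inf[OF assms(1,3)] by blast
  define s where "s = sqrt (norm a ^ 2 + e ^ 2)"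
  have spos: "s > 0" unfolding s_def using e by (simp add: add_nonneg_pos)
  have nas: "norm a \<le> s" unfolding s_def by (rule real_le_rsqrt) simp
  define d where "d = g0 + (r / s) *\<^sub>R a"
  have "norm (d - g0) = r * norm a / s" unfolding d_def using r spos by simp
  also have "\<dots> \<le> r" using nas spos r by (simp add: divide_le_eq mult_left_mono)
  finally have feas: "norm (d - g0) \<le> r" .
  have fo: "0 \<le> (x - a) \<bullet> g0 + r * (a \<bullet> (x - a)) / s" if xC: "x \<in> C" for x
    unfolding s_def
  proof (rule first_order[OF r e])
    fix t :: real assume t: "0 < t" "t \<le> 1"
    have "(1 - t) *\<^sub>R a + t *\<^sub>R x \<in> C"
      using \<open>convex C\<close> aC xC t unfolding convex_def by auto
    moreover have "(1 - t) *\<^sub>R a + t *\<^sub>R x = a + t *\<^sub>R (x - a)" by (simp add: algebra_simps)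
    ultimately show "a \<bullet> g0 + r * sqrt (norm a ^ 2 + e ^ 2) \<le> (a + t *\<^sub>R (x - a)) \<bullet> g0 + r * sqrt (norm (a + t *\<^sub>R (x - a)) ^ 2 + e ^ 2)"
      using amin by metis
  qed
  have ad: "a \<bullet> g0 + r * norm a - r * e \<le> a \<bullet> d"
  proof -
    have ad1: "a \<bullet> d = a \<bullet> g0 + r * (norm a ^ 2 / s)"
      unfolding d_def by (simp add: inner_add_right power2_norm_eq_inner)
    have key: "norm a - e \<le> norm a ^ 2 / s"
    proof (cases "norm a \<le> e")
      case True
      have "0 \<le> norm a ^ 2 / s" using spos by simp
      then show ?thesis using True by linarith
    next
      case False
      have "norm a ^ 2 + e ^ 2 \<le> (norm a + e) ^ 2" using e by (simp add: power2_eq_square algebra_simps)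
      then have "s \<le> sqrt ((norm a + e) ^ 2)" unfolding s_def by (rule real_sqrt_le_mono)
      then have "s \<le> norm a + e" using e by simp
      then have "(norm a - e) * s \<le> (norm a - e) * (norm a + e)"
        using False by (intro mult_left_mono) auto
      also have "\<dots> \<le> norm a ^ 2" by (simp add: power2_eq_square algebra_simps)
      finally show ?thesis using spos by (simp add: le_divide_eq)
    qed
    have "r * (norm a - e) \<le> r * (norm a ^ 2 / s)" using key r by (rule mult_left_mono)
    then show ?thesis unfolding ad1 by (simp add: algebra_simps)
  qed
  have "\<forall>x\<in>C. a \<bullet> g0 + r * norm a - r * e \<le> x \<bullet> d"
  proof
    fix x assume xC: "x \<in> C"
    have "x \<bullet> d - a \<bullet> d = (x - a) \<bullet> g0 + r * (a \<bullet> (x - a)) / s"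
      unfolding d_def by (simp add: inner_add_right inner_diff_left inner_diff_right inner_commute algebra_simps diff_divide_distrib)
    then have "a \<bullet> d \<le> x \<bullet> d" using fo[OF xC] by linarith
    then show "a \<bullet> g0 + r * norm a - r * e \<le> x \<bullet> d" using ad by linarith
  qed
  then show ?thesis using aC feas by blast
qed

lemma gw_in_hull:
  assumes "w \<in> prob_simplex K"
  shows "gw K g w \<in> convex hull (g ` {1..K})"
  unfolding gw_def
  apply (rule convex_sum)
  using assms by (auto simp: prob_simplex_def intro: hull_inc)

lemma hull_in_gw:
  fixes g :: "nat \<Rightarrow> 'a::real_vector"
  shows "convex hull (g ` {1..K}) \<subseteq> {gw K g w | w. w \<in> prob_simplex K}"
proof (rule hull_minimal)
  show "g ` {1..K} \<subseteq> {gw K g w | w. w \<in> prob_simplex K}"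
  proof
    fix y assume "y \<in> g ` {1..K}"
    then obtain i where i: "i \<in> {1..K}" "y = g i" by auto
    define w where "w = (\<lambda>j. if j = i then 1 else (0::real))"
    have "w \<in> prob_simplex K" using i unfolding prob_simplex_def w_def by auto
    moreover have "gw K g w = y"
    proof -
      have "\<And>j. w j *\<^sub>R g j = (if j = i then g i else 0)" unfolding w_def by simp
      then show ?thesis unfolding gw_def using i by simp
    qed
    ultimately show "y \<in> {gw K g w | w. w \<in> prob_simplex K}" by blast
  qed
  show "convex {gw K g w | w. w \<in> prob_simplex K}"
    unfolding convex_def
  proof (intro ballI allI impI)
    fix x y :: 'a and u v :: real
    assume x: "x \<in> {gw K g w | w. w \<in> prob_simplex K}" and y: "y \<in> {gw K g w | w. w \<in> prob_simplex K}"
      and uv: "0 \<le> u" "0 \<le> v" "u + v = 1"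
    obtain w1 where w1: "w1 \<in> prob_simplex K" "x = gw K g w1" using x by blast
    obtain w2 where w2: "w2 \<in> prob_simplex K" "y = gw K g w2" using y by blast
    define w where "w = (\<lambda>j. u * w1 j + v * w2 j)"
    have "w \<in> prob_simplex K" using w1 w2 uv unfolding prob_simplex_def w_def
      by (auto simp: sum.distrib sum_distrib_left[symmetric])
    moreover have "gw K g w = u *\<^sub>R x + v *\<^sub>R y" using w1 w2 unfolding gw_def w_def
      by (simp add: scaleR_add_left sum.distrib scaleR_sum_right)
    ultimately show "u *\<^sub>R x + v *\<^sub>R y \<in> {gw K g w | w. w \<in> prob_simplex K}"
      by (intro CollectI exI[of _ w]) simp
  qed
qed

lemma primal_le:
  fixes g :: "nat \<Rightarrow> 'a::real_inner"
  assumes "1 \<le> K" "i \<in> {1..K}"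
  shows "primal_obj K g d \<le> g i \<bullet> d"
  unfolding primal_obj_def using assms by (intro Min_le) auto

lemma primal_ge:
  fixes g :: "nat \<Rightarrow> 'a::real_inner"
  assumes "1 \<le> K" "\<And>i. i \<in> {1..K} \<Longrightarrow> m \<le> g i \<bullet> d"
  shows "m \<le> primal_obj K g d"
  unfolding primal_obj_def using assms by (subst Min_ge_iff) auto

lemma primal_le_gw:
  fixes g :: "nat \<Rightarrow> 'a::real_inner"
  assumes "1 \<le> K" "w \<in> prob_simplex K"
  shows "primal_obj K g d \<le> gw K g w \<bullet> d"
proof -
  have w: "\<forall>i\<in>{1..K}. 0 \<le> w i" "(\<Sum>i\<in>{1..K}. w i) = 1" using assms(2) unfolding prob_simplex_def by auto
  have "primal_obj K g d = (\<Sum>i\<in>{1..K}. w i * primal_obj K g d)"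
    using w by (simp add: sum_distrib_right[symmetric])
  also have "\<dots> \<le> (\<Sum>i\<in>{1..K}. w i * (g i \<bullet> d))"
    using w primal_le[OF assms(1)] by (intro sum_mono mult_left_mono) auto
  also have "\<dots> = gw K g w \<bullet> d" unfolding gw_def by (simp add: inner_sum_left)
  finally show ?thesis .
qed

theorem lemma1:
  fixes g :: "nat \<Rightarrow> 'a::euclidean_space" and c :: real and K :: nat
    and d :: 'a and w :: "nat \<Rightarrow> real"
  assumes "0 \<le> c" and "1 \<le> K"
    and "is_primal_sol K c g d"
    and "is_dual_sol K c g w"
  shows "(gw K g w \<noteq> 0 \<longrightarrow>
            d = g 0 + (c * norm (g 0) / norm (gw K g w)) *\<^sub>R gw K g w)
         \<and> primal_obj K g d = dual_obj K c g w"
proof -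
  define r where "r = c * norm (g 0)"
  have r0: "0 \<le> r" unfolding r_def using assms(1) by simp
  define C where "C = convex hull (g ` {1..K})"
  have Cc: "compact C" unfolding C_def by (intro compact_convex_hull finite_imp_compact) auto
  have Cv: "convex C" unfolding C_def by simp
  have Cne: "C \<noteq> {}" unfolding C_def using assms(2) by auto
  have dfeas: "norm (d - g 0) \<le> r" and dopt: "\<And>d'. norm (g 0 - d') \<le> r \<Longrightarrow> primal_obj K g d' \<le> primal_obj K g d"
    using assms(3) unfolding is_primal_sol_def r_def by (auto simp: norm_minus_commute)
  have wS: "w \<in> prob_simplex K" and wopt: "\<And>w'. w' \<in> prob_simplex K \<Longrightarrow> dual_obj K c g w \<le> dual_obj K c g w'"
    using assms(4) unfolding is_dual_sol_def by auto
  define V where "V = dual_obj K c g w"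
  define a where "a = gw K g w"
  have V: "V = a \<bullet> g 0 + r * norm a" unfolding V_def a_def dual_obj_def r_def by simp
  have Vle: "V \<le> x \<bullet> g 0 + r * norm x" if xC: "x \<in> C" for x
  proof -
    obtain w' where "w' \<in> prob_simplex K" "x = gw K g w'" using hull_in_gw[of g K] xC unfolding C_def by blast
    then show ?thesis using wopt unfolding V_def dual_obj_def r_def by auto
  qed
  have CS: "a \<bullet> d \<le> V"
  proof -
    have "a \<bullet> d = a \<bullet> g 0 + a \<bullet> (d - g 0)" by (simp add: inner_diff_right)
    also have "a \<bullet> (d - g 0) \<le> norm a * norm (d - g 0)" by (rule norm_cauchy_schwarz)
    also have "\<dots> \<le> norm a * r" using dfeas by (simp add: mult_left_mono)
    finally show ?thesis unfolding V by (simp add: algebra_simps)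
  qed
  have pa: "primal_obj K g d \<le> a \<bullet> d" unfolding a_def by (rule primal_le_gw[OF assms(2) wS])
  have eps: "V \<le> primal_obj K g d + r * e" if e: "0 < e" for e
  proof -
    obtain x d' where xC: "x \<in> C" and d'f: "norm (d' - g 0) \<le> r"
      and d'b: "\<And>y. y \<in> C \<Longrightarrow> x \<bullet> g 0 + r * norm x - r * e \<le> y \<bullet> d'"
      using core[OF Cc Cv Cne r0 e, of "g 0"] by blast
    have "V - r * e \<le> primal_obj K g d'"
    proof (rule primal_ge[OF assms(2)])
      fix i assume i: "i \<in> {1..K}"
      have "g i \<in> C" unfolding C_def using i by (intro hull_inc) auto
      then show "V - r * e \<le> g i \<bullet> d'" using d'b Vle[OF xC] by fastforce
    qed
    also have "\<dots> \<le> primal_obj K g d" using dopt d'f by (simp add: norm_minus_commute)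
    finally show ?thesis by simp
  qed
  have eq: "primal_obj K g d = V"
  proof (rule antisym)
    show "primal_obj K g d \<le> V" using pa CS by linarith
    show "V \<le> primal_obj K g d"
    proof (cases "r = 0")
      case True then show ?thesis using eps[of 1] by simp
    next
      case False
      show ?thesis
      proof (rule ccontr)
        assume "\<not> ?thesis"
        then have lt: "primal_obj K g d < V" by simp
        have rp: "r > 0" using False r0 by simp
        have "V \<le> primal_obj K g d + r * ((V - primal_obj K g d) / (2 * r))"
          using eps lt rp by (intro eps) (simp add: field_simps)
        also have "\<dots> = primal_obj K g d + (V - primal_obj K g d) / 2" using rp by simp
        finally have "V \<le> primal_obj K g d + (V - primal_obj K g d) / 2" .
        then show False using lt by (simp add: field_simps)
      qed
    qed
  qed
  have formula: "d = g 0 + (r / norm a) *\<^sub>R a" if anz: "a \<noteq> 0"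
  proof -
    define u where "u = d - g 0"
    have na: "norm a > 0" using anz by simp
    have au: "a \<bullet> u = norm a * r" using CS pa eq unfolding u_def V
      by (simp add: inner_diff_right algebra_simps)
    have nu: "norm u \<le> r" using dfeas unfolding u_def .
    have "norm (u - (r / norm a) *\<^sub>R a) ^ 2 = norm u ^ 2 - 2 * (r / norm a) * (a \<bullet> u) + (r / norm a)^2 * norm a ^ 2"
      unfolding power2_norm_eq_inner
      by (simp add: inner_diff_left inner_diff_right inner_commute algebra_simps power2_eq_square)
    also have "\<dots> = norm u ^ 2 - r ^ 2" using na au by (simp add: field_simps power2_eq_square)
    also have "\<dots> \<le> 0" using nu r0 by (simp add: power_mono)
    finally have "norm (u - (r / norm a) *\<^sub>R a) = 0" by simp
    then show ?thesis unfolding u_def by (simp add: algebra_simps)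
  qed
  show ?thesis using formula eq unfolding a_def r_def V_def by blast
qed

end
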